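(* Let $f:\{0,1\}^n\to\{0,1\}^m$ be a fully balanced function with $r=\dim\operatorname{img}(f)\in\{1,2\}$. Consider the procedure: set $C=B=\varnothing$. Repeat: choose $\mathbf{y}\in\{0,1\}^m\setminus\langle C\cup B\rangle$ and query $\mathbf{y}$. If $\mathbf{y}\in C(f)$, add $\mathbf{y}$ to $C$. Otherwise, if $B=\varnothing$, add $\mathbf{y}$ to $B$; if $B\neq\varnothing$, take $\mathbf{s}\in B$, put $\mathbf{y}'=\mathbf{s}\oplus\mathbf{y}$ and query $\mathbf{y}'$: if $\mathbf{y}'\in C(f)$ add $\mathbf{y}'$ to $C$, otherwise add $\mathbf{y},\mathbf{y}'$ to $B$ and stop with output $r=2$. Whenever $\#C=m-1$, stop with output $r=1$. Then the procedure always outputs the correct value of $r$, using at most $2m-1$ oracle queries.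
   Context: Strings in $\{0,1\}^k$ are identified with vectors of $\mathbb{F}_2^k$; $\oplus$ is bitwise addition mod 2; $\mathbf{a}\cdot\mathbf{b}=\bigoplus_i a_ib_i$; $\langle X\rangle$ is the linear span of $X$. $f$ is $\mathbf{y}$-balanced if $f(\mathbf{x})\cdot\mathbf{y}=0$ for exactly half of the $\mathbf{x}$ and $=1$ for the other half, and $\mathbf{y}$-constant if $f(\mathbf{x})\cdot\mathbf{y}$ is the same for all $\mathbf{x}$. $f$ is fully balanced if for every $\mathbf{y}$ it is $\mathbf{y}$-balanced or $\mathbf{y}$-constant; then $\operatorname{img}(f)$ is an affine subspace. $C(f)=\{\mathbf{y}: f\text{ is }\mathbf{y}\text{-constant}\}$. A query on $\mathbf{y}$ reports whether $\mathbf{y}\in C(f)$ (one run of the Generalised Phase Kick-Back algorithm with marker $\mathbf{y}$, whose output is $\mathbf{0}$ exactly when $f$ is $\mathbf{y}$-constant, for fully balanced $f$). *)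

theory Defs
  imports "HOL-Analysis.Analysis" "HOL-Library.Z2"
begin

text \<open>Strings in {0,1}^k are vectors of F_2^k, modelled as bit ^ 'k with k = CARD('k).
  Addition (+) on bit ^ 'k is bitwise XOR; vec.span and vec.dim are the linear span and
  dimension over the field F_2 = bit.\<close>

definition dotp :: "bit ^ 'k \<Rightarrow> bit ^ 'k \<Rightarrow> bit" where
  "dotp a b = (\<Sum>i\<in>UNIV. a $ i * b $ i)"

definition y_balanced :: "(bit ^ 'n \<Rightarrow> bit ^ 'm) \<Rightarrow> bit ^ 'm \<Rightarrow> bool" where
  "y_balanced f y \<longleftrightarrow> card {x. dotp (f x) y = 0} = card {x. dotp (f x) y = 1}"

definition y_constant :: "(bit ^ 'n \<Rightarrow> bit ^ 'm) \<Rightarrow> bit ^ 'm \<Rightarrow> bool" where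
  "y_constant f y \<longleftrightarrow> (\<forall>x x'. dotp (f x) y = dotp (f x') y)"

definition fully_balanced :: "(bit ^ 'n \<Rightarrow> bit ^ 'm) \<Rightarrow> bool" where
  "fully_balanced f \<longleftrightarrow> (\<forall>y. y_balanced f y \<or> y_constant f y)"

definition const_set :: "(bit ^ 'n \<Rightarrow> bit ^ 'm) \<Rightarrow> (bit ^ 'm) set" where
  "const_set f = {y. y_constant f y}"

definition affine_dim :: "(bit ^ 'm) set \<Rightarrow> nat" where
  "affine_dim S = vec.dim {u - v | u v. u \<in> S \<and> v \<in> S}"

text \<open>States of the procedure: Running C B q (q = number of oracle queries so far),
  or Stopped output q.\<close>
datatype 'v state = Running "'v set" "'v set" nat | Stopped nat nat

text \<open>One (nondeterministic) iteration of the procedure; Cf is the set C(f) answered by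
  the query oracle, m the output length.\<close>
inductive proc_step :: "(bit ^ 'm) set \<Rightarrow> (bit ^ 'm) state \<Rightarrow> (bit ^ 'm) state \<Rightarrow> bool"
  for Cf :: "(bit ^ 'm) set" where
  stop1: "card C = CARD('m) - 1 \<Longrightarrow> proc_step Cf (Running C B q) (Stopped 1 q)"
| addC: "card C \<noteq> CARD('m) - 1 \<Longrightarrow> y \<notin> vec.span (C \<union> B) \<Longrightarrow> y \<in> Cf \<Longrightarrow>
         proc_step Cf (Running C B q) (Running (insert y C) B (q + 1))"
| addB: "card C \<noteq> CARD('m) - 1 \<Longrightarrow> y \<notin> vec.span (C \<union> B) \<Longrightarrow> y \<notin> Cf \<Longrightarrow> B = {} \<Longrightarrow>
         proc_step Cf (Running C B q) (Running C {y} (q + 1))"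
| addC2: "card C \<noteq> CARD('m) - 1 \<Longrightarrow> y \<notin> vec.span (C \<union> B) \<Longrightarrow> y \<notin> Cf \<Longrightarrow> s \<in> B \<Longrightarrow>
         s + y \<in> Cf \<Longrightarrow>
         proc_step Cf (Running C B q) (Running (insert (s + y) C) B (q + 2))"
| stop2: "card C \<noteq> CARD('m) - 1 \<Longrightarrow> y \<notin> vec.span (C \<union> B) \<Longrightarrow> y \<notin> Cf \<Longrightarrow> s \<in> B \<Longrightarrow>
         s + y \<notin> Cf \<Longrightarrow>
         proc_step Cf (Running C B q) (Stopped 2 (q + 2))"

end

theory Submission imports Defs begin

lemma dotp_add_left: "dotp (a + b) y = dotp a y + dotp b y"
  unfolding dotp_def vector_add_component distrib_right by (rule sum.distrib)
lemma dotp_add_right: "dotp y (a + b) = dotp y a + dotp y b"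
  unfolding dotp_def vector_add_component distrib_left by (rule sum.distrib)
lemma dotp_diff_left: "dotp (a - b) y = dotp a y - dotp b y"
  unfolding dotp_def vector_minus_component left_diff_distrib by (rule sum_subtractf)
lemma dotp_smult_left: "dotp (c *s a) y = c * dotp a y"
  unfolding dotp_def vector_smult_component sum_distrib_left by (rule sum.cong) (simp_all only: ac_simps)
lemma dotp_smult_right: "dotp y (c *s a) = c * dotp y a"
  unfolding dotp_def vector_smult_component sum_distrib_left by (rule sum.cong) (simp_all only: ac_simps)
lemma dotp_zero_left[simp]: "dotp 0 y = 0" unfolding dotp_def by simp
lemma dotp_zero_right[simp]: "dotp y 0 = 0" unfolding dotp_def by simp
lemma dotp_axis[simp]: "dotp a (axis i 1) = a $ i"
  unfolding dotp_def axis_def by (simp add: if_distrib cong: if_cong)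

lemma subspace_ann_right: "vec.subspace {y. dotp a y = 0}"
  unfolding vec.subspace_def by (simp add: dotp_add_right dotp_smult_right)
lemma subspace_ann_left: "vec.subspace {d. dotp d y = 0}"
  unfolding vec.subspace_def by (simp add: dotp_add_left dotp_smult_left)

lemma bit11[simp]: "(1::bit) + 1 = 0" by (simp flip: one_add_one)

lemma lemX:
  fixes a b :: "bit ^ 'm"
  assumes "a \<noteq> 0" "a \<noteq> b"
  shows "\<exists>u. dotp a u = 1 \<and> dotp b u = 0"
proof -
  obtain k where k: "a$k \<noteq> b$k" using assms(2) vec_eq_iff by auto
  obtain i where i: "a$i = 1" using assms(1) by (metis bit_not_zero_iff vec_eq_iff zero_index)
  show ?thesis
  proof (cases "a$k = 1")
    case True
    then have "b$k = 0" using k by simp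
    then show ?thesis using True by (intro exI[of _ "axis k 1"]) simp
  next
    case False
    then have ak: "a$k = 0" and bk: "b$k = 1" using k by auto
    show ?thesis
    proof (cases "b$i = 0")
      case True then show ?thesis using i by (intro exI[of _ "axis i 1"]) simp
    next
      case False
      then have "b$i = 1" by simp
      then show ?thesis using i ak bk
        by (intro exI[of _ "axis i 1 + axis k 1"]) (simp add: dotp_add_right)
    qed
  qed
qed

lemma dimUNIV: "vec.dim (UNIV :: (bit^'m) set) = CARD('m)"
  by (simp add: card_cart_basis)

lemma indep_ins:
  fixes C :: "(bit^'m) set"
  assumes "C \<subseteq> S" "vec.subspace S" "vec.independent C" "u \<notin> S"
  shows "vec.independent (insert u C) \<and> u \<notin> C"
proof -
  have "vec.span C \<subseteq> S" using assms by (simp add: vec.span_minimal)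
  then have "u \<notin> vec.span C" using assms by blast
  then show ?thesis using assms vec.span_superset[of C] vec.independent_insertI[of u C] by blast
qed

lemma indep_card:
  fixes C :: "(bit^'m) set"
  assumes "vec.independent C"
  shows "finite C \<and> card C \<le> CARD('m)"
  using vec.independent_card_le_dim[of C UNIV] assms vec.finiteI_independent dimUNIV[where 'm='m] by auto


definition inv :: "(bit ^ 'm) set \<Rightarrow> (bit ^ 'm) set \<Rightarrow> (bit ^ 'm) set \<Rightarrow> nat \<Rightarrow> bool" where
  "inv Cf C B q \<longleftrightarrow> C \<subseteq> Cf \<and> B \<inter> Cf = {} \<and> (B = {} \<or> (\<exists>s. B = {s})) \<and>
     vec.independent (C \<union> B) \<and> C \<inter> B = {} \<and> q \<le> 2 * card C + card B"

fun qof :: "'v state \<Rightarrow> nat" where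
  "qof (Running C B q) = q" | "qof (Stopped a q) = q"

lemma no_step_stopped: "\<not> proc_step Cf (Stopped a b) t"
  by (auto elim: proc_step.cases)

lemma step_q: "proc_step Cf (Running C B q) (Running C' B' q') \<Longrightarrow> q < q'"
  by (auto elim: proc_step.cases)

locale absP =
  fixes Cf :: "(bit ^ 'm) set" and r :: nat
  assumes P1: "\<And>C. C \<subseteq> Cf \<Longrightarrow> vec.independent C \<Longrightarrow> card C + 1 \<le> CARD('m)"
    and P3: "r = 1 \<Longrightarrow> s \<notin> Cf \<Longrightarrow> y \<notin> Cf \<Longrightarrow> s + y \<in> Cf"
    and P4: "r = 2 \<Longrightarrow> C \<subseteq> Cf \<Longrightarrow> vec.independent C \<Longrightarrow> card C + 2 \<le> CARD('m)"
    and r12: "r \<in> {1,2}"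
begin

lemma inv_bounds:
  assumes "inv Cf C B q"
  shows "finite C \<and> finite B \<and> card B \<le> 1 \<and> card C + 1 \<le> CARD('m)
     \<and> card (C \<union> B) = card C + card B"
proof -
  have i: "vec.independent (C \<union> B)" using assms by (simp add: inv_def)
  then have f: "finite (C \<union> B)" using indep_card by blast
  have "vec.independent C" using i vec.independent_mono by blast
  then have "card C + 1 \<le> CARD('m)" using P1 assms by (simp add: inv_def)
  moreover have "card B \<le> 1" using assms by (auto simp: inv_def)
  moreover have "card (C \<union> B) = card C + card B"
    using f assms by (intro card_Un_disjoint) (auto simp: inv_def)
  ultimately show ?thesis using f by auto
qed

lemma reach_inv:
  assumes "(proc_step Cf)\<^sup>*\<^sup>* (Running {} {} 0) s"
  shows "case s of Running C B q \<Rightarrow> inv Cf C B q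
          | Stopped out q \<Rightarrow> out = r \<and> q \<le> 2 * CARD('m) - 1"
  using assms
proof (induction rule: rtranclp_induct)
  case base
  then show ?case by (simp add: inv_def vec.independent_empty)
next
  case (step s t)
  from step.hyps(2) step.IH show ?case
  proof cases
    case (stop1 C B q)
    then have iv: "inv Cf C B q" using step.IH by simp
    note bd = inv_bounds[OF iv]
    have "r \<noteq> 2"
    proof
      assume "r = 2"
      then have "card C + 2 \<le> CARD('m)" using P4 iv vec.independent_mono
        by (auto simp: inv_def)
      then show False using stop1 by simp
    qed
    then have r1: "r = 1" using r12 by auto
    have "0 < CARD('m)" by simp
    moreover have "q \<le> 2 * card C + card B" using iv by (simp add: inv_def)
    ultimately have "q \<le> 2 * CARD('m) - 1" using bd stop1 by linarith
    then show ?thesis using stop1 r1 by simp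
  next
    case (addC C y B q)
    then have iv: "inv Cf C B q" using step.IH by simp
    note bd = inv_bounds[OF iv]
    have yC: "y \<notin> C" and yB: "y \<notin> B"
      using addC vec.span_superset[of "C \<union> B"] by auto
    have "vec.independent (insert y (C \<union> B))"
      using addC iv by (intro vec.independent_insertI) (auto simp: inv_def)
    then show ?thesis using addC iv bd yC yB by (auto simp: inv_def)
  next
    case (addB C y B q)
    then have iv: "inv Cf C B q" using step.IH by simp
    note bd = inv_bounds[OF iv]
    have yC: "y \<notin> C"
      using addB vec.span_superset[of "C \<union> B"] by auto
    have "vec.independent (insert y (C \<union> B))"
      using addB iv by (intro vec.independent_insertI) (auto simp: inv_def)
    then show ?thesis using addB iv bd yC by (auto simp: inv_def)
  next
    case (addC2 C y B s q)
    then have iv: "inv Cf C B q" using step.IH by simp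
    note bd = inv_bounds[OF iv]
    have sp: "s \<in> vec.span (C \<union> B)" using addC2 vec.span_superset by blast
    have ns: "s + y \<notin> vec.span (C \<union> B)"
      using addC2 vec.span_add_eq[OF sp] by simp
    have yC: "s + y \<notin> C" and yB: "s + y \<notin> B"
      using ns vec.span_superset[of "C \<union> B"] by auto
    have "vec.independent (insert (s + y) (C \<union> B))"
      using ns iv by (intro vec.independent_insertI) (auto simp: inv_def)
    moreover have "card B = 1" using addC2 iv by (auto simp: inv_def)
    ultimately show ?thesis using addC2 iv bd yC yB by (auto simp: inv_def)
  next
    case (stop2 C y B s q)
    then have iv: "inv Cf C B q" using step.IH by simp
    note bd = inv_bounds[OF iv]
    have "s \<notin> Cf" using stop2 iv by (auto simp: inv_def)
    then have "r \<noteq> 1" using P3 stop2 by blast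
    then have r2: "r = 2" using r12 by auto
    then have "card C + 2 \<le> CARD('m)" using P4 iv vec.independent_mono
      by (auto simp: inv_def)
    moreover have "card B = 1" using stop2 iv by (auto simp: inv_def)
    moreover have "q \<le> 2 * card C + card B" using iv by (simp add: inv_def)
    ultimately have "q + 2 \<le> 2 * CARD('m) - 1" by linarith
    then show ?thesis using stop2 r2 by simp
  qed
qed

lemma progress:
  assumes "inv Cf C B q"
  shows "\<exists>s'. proc_step Cf (Running C B q) s'"
proof (cases "card C = CARD('m) - 1")
  case True
  then show ?thesis using proc_step.stop1 by blast
next
  case False
  note bd = inv_bounds[OF assms]
  have "\<exists>y. y \<notin> vec.span (C \<union> B)"
  proof (rule ccontr)
    assume "\<not> ?thesis"
    then have "vec.dim (UNIV :: (bit^'m) set) \<le> card (C \<union> B)"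
      using bd by (intro vec.span_card_ge_dim) auto
    then have "CARD('m) \<le> card C + card B" using bd dimUNIV[where 'm='m] by simp
    then show False using bd False by linarith
  qed
  then obtain y where y: "y \<notin> vec.span (C \<union> B)" by blast
  show ?thesis
  proof (cases "y \<in> Cf")
    case True then show ?thesis using proc_step.addC[OF False y] by blast
  next
    case yn: False
    show ?thesis
    proof (cases "B = {}")
      case True then show ?thesis using proc_step.addB[OF False y yn] by blast
    next
      case Bn: False
      then obtain s where s: "s \<in> B" by blast
      show ?thesis
      proof (cases "s + y \<in> Cf")
        case True then show ?thesis using proc_step.addC2[OF False y yn s] by blast
      next
        case False2: False then show ?thesis using proc_step.stop2[OF False y yn s] by blast
      qed
    qed
  qed
qed

lemma main_abs:
  "(\<nexists>g. g 0 = Running {} {} 0 \<and> (\<forall>i. proc_step Cf (g i) (g (Suc i))))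
    \<and> (\<forall>C B q. (proc_step Cf)\<^sup>*\<^sup>* (Running {} {} 0) (Running C B q)
          \<longrightarrow> (\<exists>s'. proc_step Cf (Running C B q) s'))
    \<and> (\<forall>out q. (proc_step Cf)\<^sup>*\<^sup>* (Running {} {} 0) (Stopped out q)
          \<longrightarrow> out = r \<and> q \<le> 2 * CARD('m) - 1)"
proof (intro conjI allI impI)
  show "\<exists>s'. proc_step Cf (Running C B q) s'"
    if "(proc_step Cf)\<^sup>*\<^sup>* (Running {} {} 0) (Running C B q)" for C B q
    using reach_inv[OF that] progress by simp
  show "out = r" "q \<le> 2 * CARD('m) - 1"
    if "(proc_step Cf)\<^sup>*\<^sup>* (Running {} {} 0) (Stopped out q)" for out q
    using reach_inv[OF that] by simp_all
  show "\<nexists>g. g 0 = Running {} {} 0 \<and> (\<forall>i. proc_step Cf (g i) (g (Suc i)))"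
  proof
    assume "\<exists>g. g 0 = Running {} {} 0 \<and> (\<forall>i. proc_step Cf (g i) (g (Suc i)))"
    then obtain g where g0: "g 0 = Running {} {} 0"
      and gs: "\<And>i. proc_step Cf (g i) (g (Suc i))" by blast
    have reach: "(proc_step Cf)\<^sup>*\<^sup>* (Running {} {} 0) (g i)" for i
      by (induction i) (use g0 gs in \<open>auto intro: rtranclp.rtrancl_into_rtrancl\<close>)
    have run: "\<exists>C B q. g i = Running C B q" for i
    proof (cases "g i")
      case (Stopped a b) then show ?thesis using gs[of i] no_step_stopped by metis
    qed auto
    have inc: "qof (g i) < qof (g (Suc i))" for i
      using run[of i] run[of "Suc i"] gs[of i] step_q by fastforce
    have ge: "i \<le> qof (g i)" for i
    proof (induction i)
      case (Suc i) then show ?case using inc[of i] by simp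
    qed simp
    have bound: "qof (g i) \<le> 2 * CARD('m)" for i
    proof -
      obtain C B q where e: "g i = Running C B q" using run by blast
      have iv: "inv Cf C B q" using reach_inv[OF reach[of i]] e by simp
      note bd = inv_bounds[OF iv]
      show ?thesis using iv bd e by (simp add: inv_def)
    qed
    show False using ge[of "2 * CARD('m) + 1"] bound[of "2 * CARD('m) + 1"] by simp
  qed
qed

end


lemma const_set_char:
  fixes f :: "bit ^ 'n \<Rightarrow> bit ^ 'm"
  shows "y \<in> const_set f \<longleftrightarrow>
    (\<forall>d \<in> {u - v | u v. u \<in> range f \<and> v \<in> range f}. dotp d y = 0)"
proof -
  have e: "dotp (f x - f x') y = 0 \<longleftrightarrow> dotp (f x) y = dotp (f x') y" for x x'
    by (simp only: dotp_diff_left right_minus_eq)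
  show ?thesis
    unfolding const_set_def y_constant_def mem_Collect_eq
  proof
    assume h: "\<forall>x x'. dotp (f x) y = dotp (f x') y"
    show "\<forall>d \<in> {u - v | u v. u \<in> range f \<and> v \<in> range f}. dotp d y = 0"
    proof
      fix d assume "d \<in> {u - v | u v. u \<in> range f \<and> v \<in> range f}"
      then obtain x x' where "d = f x - f x'" by blast
      then show "dotp d y = 0" using e h by simp
    qed
  next
    assume h: "\<forall>d \<in> {u - v | u v. u \<in> range f \<and> v \<in> range f}. dotp d y = 0"
    show "\<forall>x x'. dotp (f x) y = dotp (f x') y"
    proof (intro allI)
      fix x x'
      have "f x - f x' \<in> {u - v | u v. u \<in> range f \<and> v \<in> range f}" by blast
      then show "dotp (f x) y = dotp (f x') y" using e h by blast
    qed
  qed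
qed

lemma concrete_absP:
  fixes f :: "bit ^ 'n \<Rightarrow> bit ^ 'm" and r :: nat
  assumes "r = affine_dim (range f)" and "r \<in> {1, 2}"
  shows "absP (const_set f) r"
proof -
  define D0 where "D0 = {u - v | u v. u \<in> range f \<and> v \<in> range f}"
  have cs: "y \<in> const_set f \<longleftrightarrow> (\<forall>d\<in>D0. dotp d y = 0)" for y
    unfolding D0_def by (rule const_set_char)
  obtain Bs where Bs: "Bs \<subseteq> D0" "vec.independent Bs" "D0 \<subseteq> vec.span Bs" "card Bs = vec.dim D0"
    using vec.basis_exists by blast
  have cB: "card Bs = r" using Bs assms(1) by (simp add: affine_dim_def D0_def)
  have nz: "0 \<notin> Bs" using Bs vec.dependent_zero by blast
  show ?thesis
  proof (cases "r = 1")
    case True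
    then obtain d where d: "Bs = {d}" using cB card_1_singletonE[of Bs] by auto
    have d0: "d \<noteq> 0" using nz d by auto
    have Cfeq: "const_set f = {y. dotp d y = 0}"
    proof (intro set_eqI iffI)
      fix y assume "y \<in> const_set f"
      then show "y \<in> {y. dotp d y = 0}" using cs Bs d by auto
    next
      fix y assume y: "y \<in> {y. dotp d y = 0}"
      have "vec.span Bs \<subseteq> {e. dotp e y = 0}"
        using y d by (intro vec.span_minimal subspace_ann_left) auto
      then show "y \<in> const_set f" using cs Bs by blast
    qed
    obtain i where i: "d$i = 1" using d0 by (metis bit_not_zero_iff vec_eq_iff zero_index)
    show ?thesis
    proof
      fix C assume "C \<subseteq> const_set f" "vec.independent C"
      then have "vec.independent (insert (axis i 1) C) \<and> axis i 1 \<notin> C"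
        using i Cfeq subspace_ann_right[of d] indep_ins[of C "{y. dotp d y = 0}" "axis i 1"] by simp
      then show "card C + 1 \<le> CARD('m)" using indep_card[of "insert (axis i 1) C"] indep_card[of C] \<open>vec.independent C\<close> by simp
    next
      fix s y assume "s \<notin> const_set f" "y \<notin> const_set f"
      then show "s + y \<in> const_set f" using Cfeq by (simp add: dotp_add_right)
    next
      fix C assume "r = 2" then show "card C + 2 \<le> CARD('m)" using True by simp
    qed (use assms in simp)
  next
    case False
    then have r2: "r = 2" using assms by auto
    then obtain d1 d2 where d: "Bs = {d1, d2}" "d1 \<noteq> d2" using cB card_2_iff[of Bs] by auto
    have d0: "d1 \<noteq> 0" "d2 \<noteq> 0" using nz d by auto
    have sub: "const_set f \<subseteq> {y. dotp d1 y = 0} \<inter> {y. dotp d2 y = 0}"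
      using cs Bs d by auto
    obtain u where u: "dotp d1 u = 1" "dotp d2 u = 0" using lemX[OF d0(1) d(2)] by blast
    obtain v where v: "dotp d2 v = 1" "dotp d1 v = 0" using lemX[OF d0(2), of d1] d(2) by auto
    have P4: "card C + 2 \<le> CARD('m)" if C: "C \<subseteq> const_set f" "vec.independent C" for C
    proof -
      have 1: "vec.independent (insert v C) \<and> v \<notin> C"
      proof (rule indep_ins[of C "{y. dotp d2 y = 0}" v])
        show "C \<subseteq> {y. dotp d2 y = 0}" using C(1) sub by blast
      qed (use C(2) v(1) subspace_ann_right[of d2] in simp_all)
      have 2: "vec.independent (insert u (insert v C)) \<and> u \<notin> insert v C"
      proof (rule indep_ins[of "insert v C" "{y. dotp d1 y = 0}" u])
        show "insert v C \<subseteq> {y. dotp d1 y = 0}" using C(1) sub v(2) by blast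
      qed (use 1 u(1) subspace_ann_right[of d1] in simp_all)
      have "finite C" using C indep_card by blast
      then show ?thesis using 1 2 indep_card[of "insert u (insert v C)"] by simp
    qed
    show ?thesis
    proof
      fix C assume "C \<subseteq> const_set f" "vec.independent C"
      then have "card C + 2 \<le> CARD('m)" using P4 by blast
      then show "card C + 1 \<le> CARD('m)" by simp
    next
      fix s y assume "r = 1" then show "s + y \<in> const_set f" using r2 by simp
    next
      fix C assume "C \<subseteq> const_set f" "vec.independent C"
      then show "card C + 2 \<le> CARD('m)" using P4 by blast
    qed (use assms in simp)
  qed
qed

theorem mainTheorem9:
  fixes f :: "bit ^ 'n \<Rightarrow> bit ^ 'm" and r :: nat
  assumes "fully_balanced f"
    and "r = affine_dim (range f)"
    and "r \<in> {1, 2}"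
  shows "(\<nexists>g. g 0 = Running {} {} 0 \<and> (\<forall>i. proc_step (const_set f) (g i) (g (Suc i))))
    \<and> (\<forall>C B q. (proc_step (const_set f))\<^sup>*\<^sup>* (Running {} {} 0) (Running C B q)
          \<longrightarrow> (\<exists>s'. proc_step (const_set f) (Running C B q) s'))
    \<and> (\<forall>out q. (proc_step (const_set f))\<^sup>*\<^sup>* (Running {} {} 0) (Stopped out q)
          \<longrightarrow> out = r \<and> q \<le> 2 * CARD('m) - 1)"
proof -
  interpret absP "const_set f" r using concrete_absP assms(2,3) by blast
  show ?thesis by (rule main_abs)
qed

end
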